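(* Let $\tilde X\in\mathbb{R}^{n\times k}$ have columns of unit Euclidean norm (i.e. $\Gamma_{\ell\ell}=1$ for all $\ell$, where $\Gamma=\tilde X^t\tilde X$). Let $0<\nu<1$ and let $\mathcal{I}\subset\{1,\dots,k\}$ satisfy $\tau(\mathcal{I})\le\nu$. Then for every $x\in\mathbb{R}^{\#(\mathcal{I})}$, $$\|x\|_2^2(1-\nu)\le x^t\,\Gamma_{\mathcal{I}}\,x\le \|x\|_2^2(1+\nu).$$
   Context: $\mathcal{G}_1,\dots,\mathcal{G}_p$ is a partition of $\{1,\dots,k\}$ into groups with $t_j=\#\mathcal{G}_j$; each index $\ell$ is written $\ell=(j,t)$ with $j$ the group containing $\ell$ and $t\in\{1,\dots,t_j\}$ its rank inside $\mathcal{G}_j$. $\Gamma_{\mathcal{I}}=\tilde X_{\mathcal{I}}^t\tilde X_{\mathcal{I}}$ where $\tilde X_{\mathcal{I}}$ is the submatrix of columns indexed by $\mathcal{I}$. $\gamma_{BT}=\sup\{|\Gamma_{(j,t)(j',t')}|: t\neq t'\}$ (over all $j,j'$ and admissible ranks), $\gamma_{BG}=\sup\{|\Gamma_{(j,t)(j',t)}|: j\ne j',\ t\le t_j\wedge t_{j'}\}$, and $\tau(\mathcal{I})=\#(\mathcal{I})\,\gamma_{BT}+\#\{j:\exists t,\ (j,t)\in\mathcal{I}\}\,\gamma_{BG}$. *)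

theory Defs
  imports Complex_Main
begin

text \<open>The design matrix X is given by its entries X i l, rows i in {1..n},
  columns l in {1..k}. Gram matrix entries Gamma_{l l'}.\<close>
definition gram :: "nat \<Rightarrow> (nat \<Rightarrow> nat \<Rightarrow> real) \<Rightarrow> nat \<Rightarrow> nat \<Rightarrow> real" where
  "gram n X l l' = (\<Sum>i=1..n. X i l * X i l')"

definition is_partition :: "nat \<Rightarrow> nat \<Rightarrow> (nat \<Rightarrow> nat set) \<Rightarrow> bool" where
  "is_partition k p G \<longleftrightarrow>
     (\<forall>j\<in>{1..p}. G j \<noteq> {}) \<and>
     (\<forall>j\<in>{1..p}. \<forall>j'\<in>{1..p}. j \<noteq> j' \<longrightarrow> G j \<inter> G j' = {}) \<and>
     (\<Union>j\<in>{1..p}. G j) = {1..k}"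

definition grp :: "nat \<Rightarrow> (nat \<Rightarrow> nat set) \<Rightarrow> nat \<Rightarrow> nat" where
  "grp p G l = (THE j. j \<in> {1..p} \<and> l \<in> G j)"

definition rnk :: "nat \<Rightarrow> (nat \<Rightarrow> nat set) \<Rightarrow> nat \<Rightarrow> nat" where
  "rnk p G l = card {m \<in> G (grp p G l). m \<le> l}"

text \<open>gamma_BT and gamma_BG (supremum of a set of absolute values; the empty
  supremum is taken to be 0).\<close>
definition gamma_BT :: "nat \<Rightarrow> nat \<Rightarrow> (nat \<Rightarrow> nat \<Rightarrow> real) \<Rightarrow> nat \<Rightarrow> (nat \<Rightarrow> nat set) \<Rightarrow> real" where
  "gamma_BT n k X p G = Max (insert 0
     {\<bar>gram n X l l'\<bar> | l l'. l \<in> {1..k} \<and> l' \<in> {1..k} \<and> rnk p G l \<noteq> rnk p G l'})"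

definition gamma_BG :: "nat \<Rightarrow> nat \<Rightarrow> (nat \<Rightarrow> nat \<Rightarrow> real) \<Rightarrow> nat \<Rightarrow> (nat \<Rightarrow> nat set) \<Rightarrow> real" where
  "gamma_BG n k X p G = Max (insert 0
     {\<bar>gram n X l l'\<bar> | l l'. l \<in> {1..k} \<and> l' \<in> {1..k} \<and>
        grp p G l \<noteq> grp p G l' \<and> rnk p G l = rnk p G l'})"

definition tau :: "nat \<Rightarrow> nat \<Rightarrow> (nat \<Rightarrow> nat \<Rightarrow> real) \<Rightarrow> nat \<Rightarrow> (nat \<Rightarrow> nat set) \<Rightarrow> nat set \<Rightarrow> real" where
  "tau n k X p G I = real (card I) * gamma_BT n k X p G
                    + real (card (grp p G ` I)) * gamma_BG n k X p G"

end

theory Submission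
  imports Defs
begin

lemma pair_bound:
  fixes x :: "nat \<Rightarrow> real" and R :: "nat \<Rightarrow> nat \<Rightarrow> bool"
  assumes fin: "finite I" and sym: "\<And>a b. R a b \<Longrightarrow> R b a"
    and cnt: "\<And>l. l \<in> I \<Longrightarrow> real (card {l'\<in>I. R l l'}) \<le> c"
  shows "(\<Sum>l\<in>I. \<Sum>l'\<in>I. if R l l' then \<bar>x l\<bar> * \<bar>x l'\<bar> else 0) \<le> c * (\<Sum>l\<in>I. (x l)\<^sup>2)"
proof -
  have pt: "\<And>l l'. (if R l l' then \<bar>x l\<bar> * \<bar>x l'\<bar> else 0)
      \<le> (if R l l' then (x l)\<^sup>2 / 2 else 0) + (if R l l' then (x l')\<^sup>2 / 2 else 0)"
  proof -
    fix l l'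
    have "\<bar>x l\<bar> * \<bar>x l'\<bar> \<le> (x l)\<^sup>2 / 2 + (x l')\<^sup>2 / 2"
      using sum_squares_ge_zero[of "\<bar>x l\<bar> - \<bar>x l'\<bar>" 0]
      by (simp add: power2_eq_square algebra_simps)
    then show "?thesis l l'" by simp
  qed
  have A: "(\<Sum>l\<in>I. \<Sum>l'\<in>I. if R l l' then (x l)\<^sup>2 / 2 else 0)
      = (\<Sum>l\<in>I. (x l)\<^sup>2 / 2 * real (card {l'\<in>I. R l l'}))"
  proof (rule sum.cong[OF refl])
    fix l assume "l \<in> I"
    have "(\<Sum>l'\<in>I. if R l l' then (x l)\<^sup>2 / 2 else 0) = (\<Sum>l'\<in>{l'\<in>I. R l l'}. (x l)\<^sup>2 / 2)"
      using fin by (simp add: sum.inter_filter[symmetric])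
    then show "(\<Sum>l'\<in>I. if R l l' then (x l)\<^sup>2 / 2 else 0) = (x l)\<^sup>2 / 2 * real (card {l'\<in>I. R l l'})"
      by simp
  qed
  have A2: "(\<Sum>l\<in>I. (x l)\<^sup>2 / 2 * real (card {l'\<in>I. R l l'})) \<le> (\<Sum>l\<in>I. (x l)\<^sup>2 / 2 * c)"
    by (rule sum_mono) (simp add: cnt mult_left_mono)
  have B: "(\<Sum>l\<in>I. \<Sum>l'\<in>I. if R l l' then (x l')\<^sup>2 / 2 else 0)
      = (\<Sum>l\<in>I. \<Sum>l'\<in>I. if R l l' then (x l)\<^sup>2 / 2 else 0)"
    apply (subst sum.swap)
    using sym by (intro sum.cong refl) metis
  have "(\<Sum>l\<in>I. \<Sum>l'\<in>I. if R l l' then \<bar>x l\<bar> * \<bar>x l'\<bar> else 0)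
      \<le> (\<Sum>l\<in>I. \<Sum>l'\<in>I. (if R l l' then (x l)\<^sup>2 / 2 else 0) + (if R l l' then (x l')\<^sup>2 / 2 else 0))"
    by (intro sum_mono pt)
  also have "\<dots> = 2 * (\<Sum>l\<in>I. \<Sum>l'\<in>I. if R l l' then (x l)\<^sup>2 / 2 else 0)"
    using B by (simp add: sum.distrib)
  also have "\<dots> \<le> 2 * (\<Sum>l\<in>I. (x l)\<^sup>2 / 2 * c)" using A A2 by simp
  also have "\<dots> = c * (\<Sum>l\<in>I. (x l)\<^sup>2)" by (simp add: sum_distrib_left sum_divide_distrib algebra_simps)
  finally show ?thesis .
qed

lemma grp_mem:
  assumes "is_partition k p G" "l \<in> {1..k}"
  shows "grp p G l \<in> {1..p} \<and> l \<in> G (grp p G l)"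
proof -
  from assms obtain j where j: "j \<in> {1..p}" "l \<in> G j" unfolding is_partition_def by blast
  have "\<And>j'. j' \<in> {1..p} \<and> l \<in> G j' \<Longrightarrow> j' = j"
    using assms(1) j unfolding is_partition_def by blast
  hence "grp p G l = j" unfolding grp_def using j by (intro the_equality) auto
  with j show ?thesis by simp
qed

lemma rank_inj:
  assumes P: "is_partition k p G" and l: "l \<in> {1..k}" and l': "l' \<in> {1..k}"
    and g: "grp p G l = grp p G l'" and r: "rnk p G l = rnk p G l'"
  shows "l = l'"
proof (rule ccontr)
  assume ne: "l \<noteq> l'"
  let ?j = "grp p G l"
  have m: "l \<in> G ?j" "l' \<in> G ?j" using grp_mem[OF P l] grp_mem[OF P l'] g by auto
  have jp: "?j \<in> {1..p}" using grp_mem[OF P l] by auto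
  have sub: "G ?j \<subseteq> {1..k}" using P jp unfolding is_partition_def by blast
  hence fin: "finite (G ?j)" using finite_subset by blast
  have lt: "\<And>a b. a \<in> G ?j \<Longrightarrow> b \<in> G ?j \<Longrightarrow> a < b \<Longrightarrow>
      card {m \<in> G ?j. m \<le> a} < card {m \<in> G ?j. m \<le> b}"
  proof (rule psubset_card_mono)
    fix a b assume "a \<in> G ?j" "b \<in> G ?j" "a < b"
    show "finite {m \<in> G ?j. m \<le> b}" using fin by auto
    have "b \<notin> {m \<in> G ?j. m \<le> a}" using \<open>a < b\<close> by auto
    moreover have "b \<in> {m \<in> G ?j. m \<le> b}" using \<open>b \<in> G ?j\<close> by auto
    ultimately show "{m \<in> G ?j. m \<le> a} \<subset> {m \<in> G ?j. m \<le> b}" by auto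
  qed
  have "rnk p G l = card {m \<in> G ?j. m \<le> l}" "rnk p G l' = card {m \<in> G ?j. m \<le> l'}"
    unfolding rnk_def using g by auto
  with r ne lt[OF m(1) m(2)] lt[OF m(2) m(1)] show False by (cases "l < l'") auto
qed

lemma max_bound:
  assumes "finite S" "a \<in> insert 0 S"
  shows "a \<le> Max (insert 0 S)"
  using assms by (simp add: Max_ge)

lemma fin_sets:
  "finite {\<bar>gram n X l l'\<bar> | l l'. l \<in> {1..k} \<and> l' \<in> {1..k} \<and> Q l l'}"
proof (rule finite_subset)
  show "{\<bar>gram n X l l'\<bar> | l l'. l \<in> {1..k} \<and> l' \<in> {1..k} \<and> Q l l'}
    \<subseteq> (\<lambda>(l,l'). \<bar>gram n X l l'\<bar>) ` ({1..k} \<times> {1..k})" by auto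
qed simp

theorem lemma1:
  fixes n k p :: nat and X :: "nat \<Rightarrow> nat \<Rightarrow> real" and G :: "nat \<Rightarrow> nat set"
    and \<nu> :: real and I :: "nat set" and x :: "nat \<Rightarrow> real"
  assumes "is_partition k p G"
    and "\<forall>l\<in>{1..k}. gram n X l l = 1"
    and "0 < \<nu>" and "\<nu> < 1"
    and "I \<subseteq> {1..k}"
    and "tau n k X p G I \<le> \<nu>"
  shows "(\<Sum>l\<in>I. (x l)\<^sup>2) * (1 - \<nu>) \<le> (\<Sum>l\<in>I. \<Sum>l'\<in>I. x l * gram n X l l' * x l')
    \<and> (\<Sum>l\<in>I. \<Sum>l'\<in>I. x l * gram n X l l' * x l') \<le> (\<Sum>l\<in>I. (x l)\<^sup>2) * (1 + \<nu>)"
proof -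
  note P = assms(1)
  have finI: "finite I" using assms(5) finite_subset by blast
  define Gm where "Gm = (\<lambda>l l'. gram n X l l')"
  define bt where "bt = gamma_BT n k X p G"
  define bg where "bg = gamma_BG n k X p G"
  define S where "S = (\<Sum>l\<in>I. (x l)\<^sup>2)"
  define R1 where "R1 = (\<lambda>l l'. l \<noteq> l' \<and> rnk p G l \<noteq> rnk p G l')"
  define R2 where "R2 = (\<lambda>l l'. l \<noteq> l' \<and> rnk p G l = rnk p G l')"
  let ?A = "(\<lambda>(l,l'). \<bar>gram n X l l'\<bar>) ` ({1..k} \<times> {1..k})"
  have fA: "finite ?A" by simp
  have bt0: "0 \<le> bt" unfolding bt_def gamma_BT_def
    by (rule max_bound, rule fin_sets) simp
  have bg0: "0 \<le> bg" unfolding bg_def gamma_BG_def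
    by (rule max_bound, rule fin_sets) simp
  have S0: "0 \<le> S" unfolding S_def by (simp add: sum_nonneg)
  have pt: "\<And>l l'. l \<in> I \<Longrightarrow> l' \<in> I \<Longrightarrow> l \<noteq> l' \<Longrightarrow>
      \<bar>gram n X l l'\<bar> \<le> (if R1 l l' then bt else 0) + (if R2 l l' then bg else 0)"
  proof -
    fix l l' assume l: "l \<in> I" and l': "l' \<in> I" and ne: "l \<noteq> l'"
    have lk: "l \<in> {1..k}" "l' \<in> {1..k}" using l l' assms(5) by auto
    show "?thesis l l'"
    proof (cases "rnk p G l = rnk p G l'")
      case True
      hence "grp p G l \<noteq> grp p G l'" using rank_inj[OF P lk] ne by blast
      hence "\<bar>gram n X l l'\<bar> \<le> bg" unfolding bg_def gamma_BG_def
        using True lk \<open>grp p G l \<noteq> grp p G l'\<close> by (intro max_bound[OF fin_sets]) blast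
      thus ?thesis using True ne unfolding R1_def R2_def by simp
    next
      case False
      hence "\<bar>gram n X l l'\<bar> \<le> bt" unfolding bt_def gamma_BT_def
        using lk False by (intro max_bound[OF fin_sets]) blast
      thus ?thesis using False ne unfolding R1_def R2_def by simp
    qed
  qed
  have S1: "(\<Sum>l\<in>I. \<Sum>l'\<in>I. if R1 l l' then \<bar>x l\<bar> * \<bar>x l'\<bar> else 0) \<le> real (card I) * S"
    unfolding S_def
  proof (rule pair_bound[OF finI])
    show "\<And>a b. R1 a b \<Longrightarrow> R1 b a" unfolding R1_def by auto
    fix l assume "l \<in> I"
    show "real (card {l'\<in>I. R1 l l'}) \<le> real (card I)"
      using finI by (simp add: card_mono)
  qed
  have S2: "(\<Sum>l\<in>I. \<Sum>l'\<in>I. if R2 l l' then \<bar>x l\<bar> * \<bar>x l'\<bar> else 0) \<le> real (card (grp p G ` I)) * S"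
    unfolding S_def
  proof (rule pair_bound[OF finI])
    show "\<And>a b. R2 a b \<Longrightarrow> R2 b a" unfolding R2_def by auto
    fix l assume "l \<in> I"
    have inj: "inj_on (grp p G) {l'\<in>I. R2 l l'}"
      unfolding inj_on_def R2_def using rank_inj[OF P] assms(5) by (auto simp del: atLeastAtMost_iff)
    have "card {l'\<in>I. R2 l l'} = card (grp p G ` {l'\<in>I. R2 l l'})"
      using card_image[OF inj] by simp
    also have "\<dots> \<le> card (grp p G ` I)" using finI by (intro card_mono) auto
    finally show "real (card {l'\<in>I. R2 l l'}) \<le> real (card (grp p G ` I))" by simp
  qed
  define Off where "Off = (\<Sum>l\<in>I. \<Sum>l'\<in>I. if l = l' then 0 else x l * gram n X l l' * x l')"
  have split: "(\<Sum>l\<in>I. \<Sum>l'\<in>I. x l * gram n X l l' * x l') = S + Off"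
  proof -
    have "\<And>l. l \<in> I \<Longrightarrow> (\<Sum>l'\<in>I. x l * gram n X l l' * x l')
        = (x l)\<^sup>2 + (\<Sum>l'\<in>I. if l = l' then 0 else x l * gram n X l l' * x l')"
    proof -
      fix l assume l: "l \<in> I"
      have g: "gram n X l l = 1" using assms(2,5) l by auto
      have "(\<Sum>l'\<in>I. x l * gram n X l l' * x l') = (\<Sum>l'\<in>I. (if l = l' then (x l)\<^sup>2 else 0)
          + (if l = l' then 0 else x l * gram n X l l' * x l'))"
        using g by (intro sum.cong refl) (auto simp: power2_eq_square)
      also have "\<dots> = (x l)\<^sup>2 + (\<Sum>l'\<in>I. if l = l' then 0 else x l * gram n X l l' * x l')"
        using finI l by (simp add: sum.distrib)
      finally show "?thesis l" .
    qed
    thus ?thesis unfolding S_def Off_def by (simp add: sum.distrib)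
  qed
  have "\<bar>Off\<bar> \<le> (\<Sum>l\<in>I. \<Sum>l'\<in>I. \<bar>if l = l' then 0 else x l * gram n X l l' * x l'\<bar>)"
    unfolding Off_def by (rule order_trans[OF sum_abs]) (intro sum_mono sum_abs)
  also have "\<dots> \<le> (\<Sum>l\<in>I. \<Sum>l'\<in>I. bt * (if R1 l l' then \<bar>x l\<bar> * \<bar>x l'\<bar> else 0)
       + bg * (if R2 l l' then \<bar>x l\<bar> * \<bar>x l'\<bar> else 0))"
  proof (intro sum_mono)
    fix l l' assume l: "l \<in> I" and l': "l' \<in> I"
    show "\<bar>if l = l' then 0 else x l * gram n X l l' * x l'\<bar> \<le> bt * (if R1 l l' then \<bar>x l\<bar> * \<bar>x l'\<bar> else 0)
       + bg * (if R2 l l' then \<bar>x l\<bar> * \<bar>x l'\<bar> else 0)"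
    proof (cases "l = l'")
      case True thus ?thesis unfolding R1_def R2_def by simp
    next
      case False
      have h: "\<bar>gram n X l l'\<bar> \<le> (if R1 l l' then bt else 0) + (if R2 l l' then bg else 0)"
        using pt[OF l l' False] .
      have "\<bar>x l * gram n X l l' * x l'\<bar> = \<bar>gram n X l l'\<bar> * (\<bar>x l\<bar> * \<bar>x l'\<bar>)"
        by (simp add: abs_mult)
      also have "\<dots> \<le> ((if R1 l l' then bt else 0) + (if R2 l l' then bg else 0)) * (\<bar>x l\<bar> * \<bar>x l'\<bar>)"
        using h by (intro mult_right_mono) auto
      also have "\<dots> = bt * (if R1 l l' then \<bar>x l\<bar> * \<bar>x l'\<bar> else 0)
       + bg * (if R2 l l' then \<bar>x l\<bar> * \<bar>x l'\<bar> else 0)" by (simp add: algebra_simps)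
      finally show ?thesis using False by simp
    qed
  qed
  also have "\<dots> = bt * (\<Sum>l\<in>I. \<Sum>l'\<in>I. if R1 l l' then \<bar>x l\<bar> * \<bar>x l'\<bar> else 0)
       + bg * (\<Sum>l\<in>I. \<Sum>l'\<in>I. if R2 l l' then \<bar>x l\<bar> * \<bar>x l'\<bar> else 0)"
    by (simp add: sum.distrib sum_distrib_left)
  also have "\<dots> \<le> bt * (real (card I) * S) + bg * (real (card (grp p G ` I)) * S)"
    using S1 S2 bt0 bg0 by (intro add_mono mult_left_mono) auto
  also have "\<dots> = tau n k X p G I * S" unfolding tau_def bt_def bg_def by (simp add: algebra_simps)
  also have "\<dots> \<le> \<nu> * S" using assms(6) S0 by (intro mult_right_mono) auto
  finally have "\<bar>Off\<bar> \<le> \<nu> * S" .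
  thus ?thesis unfolding split S_def[symmetric] by (auto simp: algebra_simps abs_le_iff)
qed

end
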